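(* Let $W_{(\alpha,\beta)}=(T_1,T_2)$ be a 2-variable weighted shift on $\ell^2(\mathbb{Z}_+^2)$, and let $$L=\begin{pmatrix} T_1^*T_1 & T_2^*T_1\\ T_1^*T_2 & T_2^*T_2\end{pmatrix},\qquad R=\begin{pmatrix} T_1T_1^* & T_1T_2^*\\ T_2T_1^* & T_2T_2^*\end{pmatrix}$$ acting on $\ell^2(\mathbb{Z}_+^2)\oplus\ell^2(\mathbb{Z}_+^2)$. For $n\ge 0$ let $\mathcal{K}(n)$ be the closed span of $\{e_{(k_1,k_2)}: k_1+k_2=n\}$. Then $\mathcal{K}(n)\oplus\mathcal{K}(n)$ reduces $L$ and $R$, and, denoting by $L|_{\mathcal{K}(n)}$, $R|_{\mathcal{K}(n)}$ the restrictions to it, $L|_{\mathcal{K}(n)}$ is unitarily equivalent to $$(\alpha_{(0,n)}^2)\oplus\Big[\bigoplus_{i=1}^n\begin{pmatrix}\alpha_{(i,n-i)}^2 & \alpha_{(i-1,n-i+1)}\beta_{(i,n-i)}\\ \alpha_{(i-1,n-i+1)}\beta_{(i,n-i)} & \beta_{(i-1,n-i+1)}^2\end{pmatrix}\Big]\oplus(\beta_{(n,0)}^2)$$ and $R|_{\mathcal{K}(n)}$ is unitarily equivalent to $$(0)\oplus\Big[\bigoplus_{i=1}^n\begin{pmatrix}\alpha_{(i-1,n-i)}^2 & \alpha_{(i-1,n-i)}\beta_{(i-1,n-i)}\\ \alpha_{(i-1,n-i)}\beta_{(i-1,n-i)} & \beta_{(i-1,n-i)}^2\end{pmatrix}\B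ig]\oplus(0).$$
   Context: Given bounded double-indexed sequences of positive reals $\alpha=(\alpha_{\mathbf{k}})$, $\beta=(\beta_{\mathbf{k}})$, $\mathbf{k}=(k_1,k_2)\in\mathbb{Z}_+^2$, the 2-variable weighted shift $W_{(\alpha,\beta)}=(T_1,T_2)$ acts on $\ell^2(\mathbb{Z}_+^2)$ with canonical orthonormal basis $\{e_{\mathbf{k}}\}$ by $T_1e_{\mathbf{k}}=\alpha_{\mathbf{k}}e_{\mathbf{k}+\varepsilon_1}$, $T_2e_{\mathbf{k}}=\beta_{\mathbf{k}}e_{\mathbf{k}+\varepsilon_2}$, with $\varepsilon_1=(1,0)$, $\varepsilon_2=(0,1)$. An operator matrix $(M_{ij})$ acts on $\mathcal{H}\oplus\mathcal{H}$ by $(h_1,h_2)\mapsto(M_{11}h_1+M_{12}h_2,\,M_{21}h_1+M_{22}h_2)$. For $n=0$ the middle direct sum is empty. *)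

theory Defs
  imports "HOL-Analysis.Infinite_Sum" "Jordan_Normal_Form.Matrix"
begin

type_synonym idx = "nat \<times> nat"

definition ell2 :: "(idx \<Rightarrow> complex) set" where
  "ell2 = {x. (\<lambda>k. (cmod (x k))\<^sup>2) summable_on UNIV}"

definition ip :: "(idx \<Rightarrow> complex) \<Rightarrow> (idx \<Rightarrow> complex) \<Rightarrow> complex" where
  "ip x y = (\<Sum>\<^sub>\<infinity>k. x k * cnj (y k))"

definition ebasis :: "idx \<Rightarrow> (idx \<Rightarrow> complex)" where
  "ebasis k = (\<lambda>j. if j = k then 1 else 0)"

(* T1 e_k = alpha_k e_(k+eps1), extended coordinatewise *)
definition shift1 :: "(idx \<Rightarrow> real) \<Rightarrow> (idx \<Rightarrow> complex) \<Rightarrow> (idx \<Rightarrow> complex)" where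
  "shift1 \<alpha> x = (\<lambda>(k1, k2). if k1 \<ge> 1 then complex_of_real (\<alpha> (k1 - 1, k2)) * x (k1 - 1, k2) else 0)"

(* T2 e_k = beta_k e_(k+eps2), extended coordinatewise *)
definition shift2 :: "(idx \<Rightarrow> real) \<Rightarrow> (idx \<Rightarrow> complex) \<Rightarrow> (idx \<Rightarrow> complex)" where
  "shift2 \<beta> x = (\<lambda>(k1, k2). if k2 \<ge> 1 then complex_of_real (\<beta> (k1, k2 - 1)) * x (k1, k2 - 1) else 0)"

definition adj :: "((idx \<Rightarrow> complex) \<Rightarrow> (idx \<Rightarrow> complex)) \<Rightarrow> ((idx \<Rightarrow> complex) \<Rightarrow> (idx \<Rightarrow> complex))" where
  "adj T = (SOME S. (\<forall>y\<in>ell2. S y \<in> ell2) \<and> (\<forall>x\<in>ell2. \<forall>y\<in>ell2. ip (T x) y = ip x (S y)))"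

type_synonym vec2 = "(idx \<Rightarrow> complex) \<times> (idx \<Rightarrow> complex)"

definition ell2sum :: "vec2 set" where
  "ell2sum = ell2 \<times> ell2"

definition ip2 :: "vec2 \<Rightarrow> vec2 \<Rightarrow> complex" where
  "ip2 x y = ip (fst x) (fst y) + ip (snd x) (snd y)"

definition add2 :: "vec2 \<Rightarrow> vec2 \<Rightarrow> vec2" where
  "add2 x y = ((\<lambda>k. fst x k + fst y k), (\<lambda>k. snd x k + snd y k))"

definition scale2 :: "complex \<Rightarrow> vec2 \<Rightarrow> vec2" where
  "scale2 c x = ((\<lambda>k. c * fst x k), (\<lambda>k. c * snd x k))"

definition opmat ::
  "((idx \<Rightarrow> complex) \<Rightarrow> (idx \<Rightarrow> complex)) \<Rightarrow> ((idx \<Rightarrow> complex) \<Rightarrow> (idx \<Rightarrow> complex)) \<Rightarrow>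
   ((idx \<Rightarrow> complex) \<Rightarrow> (idx \<Rightarrow> complex)) \<Rightarrow> ((idx \<Rightarrow> complex) \<Rightarrow> (idx \<Rightarrow> complex)) \<Rightarrow> vec2 \<Rightarrow> vec2" where
  "opmat M11 M12 M21 M22 h = ((\<lambda>k. M11 (fst h) k + M12 (snd h) k), (\<lambda>k. M21 (fst h) k + M22 (snd h) k))"

definition Lop :: "(idx \<Rightarrow> real) \<Rightarrow> (idx \<Rightarrow> real) \<Rightarrow> vec2 \<Rightarrow> vec2" where
  "Lop \<alpha> \<beta> = (let T1 = shift1 \<alpha>; T2 = shift2 \<beta> in
     opmat (adj T1 \<circ> T1) (adj T2 \<circ> T1) (adj T1 \<circ> T2) (adj T2 \<circ> T2))"

definition Rop :: "(idx \<Rightarrow> real) \<Rightarrow> (idx \<Rightarrow> real) \<Rightarrow> vec2 \<Rightarrow> vec2" where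
  "Rop \<alpha> \<beta> = (let T1 = shift1 \<alpha>; T2 = shift2 \<beta> in
     opmat (T1 \<circ> adj T1) (T1 \<circ> adj T2) (T2 \<circ> adj T1) (T2 \<circ> adj T2))"

(* K(n) = closed span of {e_(k1,k2) : k1+k2 = n}: the l^2 vectors supported on the
   finite set {k1+k2 = n} (closed span = linear span = this set, as it is finite-dim.) *)
definition Kspace :: "nat \<Rightarrow> (idx \<Rightarrow> complex) set" where
  "Kspace n = {x \<in> ell2. \<forall>k. fst k + snd k \<noteq> n \<longrightarrow> x k = 0}"

definition orth2 :: "vec2 set \<Rightarrow> vec2 set" where
  "orth2 M = {y \<in> ell2sum. \<forall>x\<in>M. ip2 x y = 0}"

definition reduces :: "(vec2 \<Rightarrow> vec2) \<Rightarrow> vec2 set \<Rightarrow> bool" where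
  "reduces A M \<longleftrightarrow> A ` M \<subseteq> M \<and> A ` orth2 M \<subseteq> orth2 M"

definition unit_equiv_restr :: "(vec2 \<Rightarrow> vec2) \<Rightarrow> vec2 set \<Rightarrow> complex mat \<Rightarrow> bool" where
  "unit_equiv_restr A M D \<longleftrightarrow> (\<exists>N. D \<in> carrier_mat N N \<and> (\<exists>U.
      bij_betw U M (carrier_vec N) \<and>
      (\<forall>x\<in>M. \<forall>y\<in>M. U (add2 x y) = U x + U y) \<and>
      (\<forall>c. \<forall>x\<in>M. U (scale2 c x) = c \<cdot>\<^sub>v U x) \<and>
      (\<forall>x\<in>M. \<forall>y\<in>M. ip2 x y = (\<Sum>i<N. vec_index (U x) i * cnj (vec_index (U y) i))) \<and>
      (\<forall>x\<in>M. U (A x) = D *\<^sub>v U x)))"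

definition sq :: "complex \<Rightarrow> complex mat" where
  "sq a = mat 1 1 (\<lambda>_. a)"

definition blk :: "complex \<Rightarrow> complex \<Rightarrow> complex \<Rightarrow> complex \<Rightarrow> complex mat" where
  "blk a b c d = mat 2 2 (\<lambda>(r, s). if r = 0 then (if s = 0 then a else b) else (if s = 0 then c else d))"

definition Lmat :: "(idx \<Rightarrow> real) \<Rightarrow> (idx \<Rightarrow> real) \<Rightarrow> nat \<Rightarrow> complex mat" where
  "Lmat \<alpha> \<beta> n = diag_block_mat
     ([sq (complex_of_real ((\<alpha> (0, n))\<^sup>2))] @
      map (\<lambda>i. blk (complex_of_real ((\<alpha> (i, n - i))\<^sup>2))
                     (complex_of_real (\<alpha> (i - 1, n - i + 1) * \<beta> (i, n - i)))
                     (complex_of_real (\<alpha> (i - 1, n - i + 1) * \<beta> (i, n - i)))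
                     (complex_of_real ((\<beta> (i - 1, n - i + 1))\<^sup>2))) [1..<n+1] @
      [sq (complex_of_real ((\<beta> (n, 0))\<^sup>2))])"

definition Rmat :: "(idx \<Rightarrow> real) \<Rightarrow> (idx \<Rightarrow> real) \<Rightarrow> nat \<Rightarrow> complex mat" where
  "Rmat \<alpha> \<beta> n = diag_block_mat
     ([sq 0] @
      map (\<lambda>i. blk (complex_of_real ((\<alpha> (i - 1, n - i))\<^sup>2))
                     (complex_of_real (\<alpha> (i - 1, n - i) * \<beta> (i - 1, n - i)))
                     (complex_of_real (\<alpha> (i - 1, n - i) * \<beta> (i - 1, n - i)))
                     (complex_of_real ((\<beta> (i - 1, n - i))\<^sup>2))) [1..<n+1] @
      [sq 0])"

end

theory Submission
  imports Defs
begin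


lemma ell2_finite_support:
  assumes "finite S" "\<And>k. k \<notin> S \<Longrightarrow> x k = 0"
  shows "x \<in> ell2"
proof -
  have "(\<lambda>k. (cmod (x k))\<^sup>2) summable_on S" using assms(1) by simp
  moreover have "(\<lambda>k. (cmod (x k))\<^sup>2) summable_on S \<longleftrightarrow> (\<lambda>k. (cmod (x k))\<^sup>2) summable_on UNIV"
    by (rule summable_on_cong_neutral) (use assms(2) in auto)
  ultimately show ?thesis unfolding ell2_def by auto
qed

lemma ebasis_ell2: "ebasis k \<in> ell2"
  by (rule ell2_finite_support[of "{k}"]) (auto simp: ebasis_def)

lemma ip_ebasis: "ip (ebasis k) z = cnj (z k)"
proof -
  have "ip (ebasis k) z = infsum (\<lambda>j. ebasis k j * cnj (z j)) {k}"
    unfolding ip_def by (rule infsum_cong_neutral) (auto simp: ebasis_def)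
  then show ?thesis by (simp add: ebasis_def)
qed

lemma sq_sum_le: "((a::real) + b)\<^sup>2 \<le> 2 * a\<^sup>2 + 2 * b\<^sup>2"
proof -
  have "(a + b)\<^sup>2 + (a - b)\<^sup>2 = 2 * a\<^sup>2 + 2 * b\<^sup>2" by (simp add: power2_eq_square algebra_simps)
  moreover have "0 \<le> (a - b)\<^sup>2" by simp
  ultimately show ?thesis by linarith
qed

lemma ell2_add:
  assumes "x \<in> ell2" "y \<in> ell2" shows "(\<lambda>k. x k + y k) \<in> ell2"
proof -
  have s: "(\<lambda>k. 2 * (cmod (x k))\<^sup>2 + 2 * (cmod (y k))\<^sup>2) summable_on UNIV"
    using assms unfolding ell2_def
    by (intro summable_on_add summable_on_cmult_right) auto
  have "(\<lambda>k. (cmod (x k + y k))\<^sup>2) summable_on UNIV"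
  proof (rule summable_on_comparison_test[OF s])
    fix k
    have "cmod (x k + y k) \<le> cmod (x k) + cmod (y k)" by (rule norm_triangle_ineq)
    then have "(cmod (x k + y k))\<^sup>2 \<le> (cmod (x k) + cmod (y k))\<^sup>2"
      by (simp add: power_mono)
    also have "\<dots> \<le> 2 * (cmod (x k))\<^sup>2 + 2 * (cmod (y k))\<^sup>2"
      by (rule sq_sum_le)
    finally show "(cmod (x k + y k))\<^sup>2 \<le> 2 * (cmod (x k))\<^sup>2 + 2 * (cmod (y k))\<^sup>2" .
  qed auto
  then show ?thesis unfolding ell2_def by auto
qed

lemma ell2_mult:
  assumes "x \<in> ell2" "\<And>k. cmod (c k) \<le> B" shows "(\<lambda>k. c k * x k) \<in> ell2"
proof -
  have s: "(\<lambda>k. B\<^sup>2 * (cmod (x k))\<^sup>2) summable_on UNIV"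
    using assms unfolding ell2_def by (intro summable_on_cmult_right) auto
  have "(\<lambda>k. (cmod (c k * x k))\<^sup>2) summable_on UNIV"
  proof (rule summable_on_comparison_test[OF s])
    fix k
    have "cmod (c k * x k) \<le> B * cmod (x k)"
      by (simp add: norm_mult assms(2) mult_right_mono)
    then show "(cmod (c k * x k))\<^sup>2 \<le> B\<^sup>2 * (cmod (x k))\<^sup>2"
      by (metis norm_ge_zero power_mono power_mult_distrib)
  qed auto
  then show ?thesis unfolding ell2_def by auto
qed

lemma ell2_reindex:
  assumes "x \<in> ell2" "inj h" shows "(\<lambda>j. x (h j)) \<in> ell2"
proof -
  have "(\<lambda>k. (cmod (x k))\<^sup>2) summable_on range h"
    using assms(1) summable_on_subset_banach[of _ UNIV "range h"] unfolding ell2_def by auto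
  then have "((\<lambda>k. (cmod (x k))\<^sup>2) \<circ> h) summable_on UNIV"
    using summable_on_reindex[OF assms(2)] by blast
  then show ?thesis unfolding ell2_def by (simp add: o_def)
qed

lemma ell2_extend:
  assumes "f \<in> ell2" "inj h" "\<And>j. g (h j) = f j" "\<And>k. k \<notin> range h \<Longrightarrow> g k = 0"
  shows "g \<in> ell2"
proof -
  have "((\<lambda>k. (cmod (g k))\<^sup>2) \<circ> h) summable_on UNIV"
    using assms(1) unfolding ell2_def by (simp add: o_def assms(3))
  then have "(\<lambda>k. (cmod (g k))\<^sup>2) summable_on range h"
    using summable_on_reindex[OF assms(2)] by blast
  moreover have "(\<lambda>k. (cmod (g k))\<^sup>2) summable_on range h \<longleftrightarrow> (\<lambda>k. (cmod (g k))\<^sup>2) summable_on UNIV"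
    by (rule summable_on_cong_neutral) (use assms(4) in auto)
  ultimately show ?thesis unfolding ell2_def by auto
qed

lemma ip_reindex:
  assumes "inj h" "\<And>k. k \<notin> range h \<Longrightarrow> f k = 0"
  shows "infsum f UNIV = infsum (\<lambda>j. f (h j)) UNIV"
proof -
  have "infsum f UNIV = infsum f (range h)"
    by (rule infsum_cong_neutral) (use assms(2) in auto)
  also have "\<dots> = infsum (f \<circ> h) UNIV" by (rule infsum_reindex[OF assms(1)])
  finally show ?thesis by (simp add: o_def)
qed

definition adj1 :: "(idx \<Rightarrow> real) \<Rightarrow> (idx \<Rightarrow> complex) \<Rightarrow> (idx \<Rightarrow> complex)" where
  "adj1 \<alpha> y = (\<lambda>(k1, k2). complex_of_real (\<alpha> (k1, k2)) * y (k1 + 1, k2))"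
definition adj2 :: "(idx \<Rightarrow> real) \<Rightarrow> (idx \<Rightarrow> complex) \<Rightarrow> (idx \<Rightarrow> complex)" where
  "adj2 \<beta> y = (\<lambda>(k1, k2). complex_of_real (\<beta> (k1, k2)) * y (k1, k2 + 1))"

lemma ip_shift1: "ip (shift1 \<alpha> x) y = ip x (adj1 \<alpha> y)"
proof -
  have "ip (shift1 \<alpha> x) y = infsum (\<lambda>j. shift1 \<alpha> x ((\<lambda>(a,b). (a+1,b)) j) * cnj (y ((\<lambda>(a,b). (a+1,b)) j))) UNIV"
    unfolding ip_def
  proof (rule ip_reindex)
    show "inj (\<lambda>(a::nat, b::nat). (a + 1, b))" by (auto simp: inj_def)
    fix k :: idx assume "k \<notin> range (\<lambda>(a, b). (a + 1, b))"
    then have "fst k = 0"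
      by (metis (no_types, lifting) Suc_diff_1 Suc_eq_plus1 case_prod_conv gr0I prod.collapse rangeI)
    then show "shift1 \<alpha> x k * cnj (y k) = 0" by (cases k) (auto simp: shift1_def)
  qed
  also have "\<dots> = ip x (adj1 \<alpha> y)"
    unfolding ip_def by (rule infsum_cong) (auto simp: shift1_def adj1_def)
  finally show ?thesis .
qed

lemma ip_shift2: "ip (shift2 \<beta> x) y = ip x (adj2 \<beta> y)"
proof -
  have "ip (shift2 \<beta> x) y = infsum (\<lambda>j. shift2 \<beta> x ((\<lambda>(a,b). (a,b+1)) j) * cnj (y ((\<lambda>(a,b). (a,b+1)) j))) UNIV"
    unfolding ip_def
  proof (rule ip_reindex)
    show "inj (\<lambda>(a::nat, b::nat). (a, b + 1))" by (auto simp: inj_def)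
    fix k :: idx assume "k \<notin> range (\<lambda>(a, b). (a, b + 1))"
    then have "snd k = 0"
      by (metis (no_types, lifting) Suc_diff_1 Suc_eq_plus1 case_prod_conv gr0I prod.collapse rangeI)
    then show "shift2 \<beta> x k * cnj (y k) = 0" by (cases k) (auto simp: shift2_def)
  qed
  also have "\<dots> = ip x (adj2 \<beta> y)"
    unfolding ip_def by (rule infsum_cong) (auto simp: shift2_def adj2_def)
  finally show ?thesis .
qed

lemma bound_cmod:
  assumes "\<forall>k. \<alpha> k > 0" "bdd_above (range \<alpha>)"
  obtains B where "\<And>k. cmod (complex_of_real (\<alpha> k)) \<le> B"
proof -
  obtain B where "\<And>k. \<alpha> k \<le> B" using assms(2) by (auto simp: bdd_above_def)
  then have "\<And>k. cmod (complex_of_real (\<alpha> k)) \<le> B" using assms(1) by (simp add: less_imp_le)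
  then show ?thesis using that by blast
qed

lemma adj1_ell2:
  assumes "\<forall>k. \<alpha> k > 0" "bdd_above (range \<alpha>)" "y \<in> ell2"
  shows "adj1 \<alpha> y \<in> ell2"
proof -
  obtain B where B: "\<And>k. cmod (complex_of_real (\<alpha> k)) \<le> B" using bound_cmod[OF assms(1,2)] by blast
  have "(\<lambda>j. y ((\<lambda>(a,b). (a+1,b)) j)) \<in> ell2"
    by (rule ell2_reindex[OF assms(3)]) (auto simp: inj_def)
  from ell2_mult[OF this, of "\<lambda>k. complex_of_real (\<alpha> k)" B] B
  have "(\<lambda>k. complex_of_real (\<alpha> k) * y (Suc (fst k), snd k)) \<in> ell2" by (simp add: case_prod_beta)
  moreover have "adj1 \<alpha> y = (\<lambda>k. complex_of_real (\<alpha> k) * y (Suc (fst k), snd k))"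
    by (rule ext) (auto simp: adj1_def)
  ultimately show ?thesis by simp
qed

lemma adj2_ell2:
  assumes "\<forall>k. \<beta> k > 0" "bdd_above (range \<beta>)" "y \<in> ell2"
  shows "adj2 \<beta> y \<in> ell2"
proof -
  obtain B where B: "\<And>k. cmod (complex_of_real (\<beta> k)) \<le> B" using bound_cmod[OF assms(1,2)] by blast
  have "(\<lambda>j. y ((\<lambda>(a,b). (a,b+1)) j)) \<in> ell2"
    by (rule ell2_reindex[OF assms(3)]) (auto simp: inj_def)
  from ell2_mult[OF this, of "\<lambda>k. complex_of_real (\<beta> k)" B] B
  have "(\<lambda>k. complex_of_real (\<beta> k) * y (fst k, Suc (snd k))) \<in> ell2" by (simp add: case_prod_beta)
  moreover have "adj2 \<beta> y = (\<lambda>k. complex_of_real (\<beta> k) * y (fst k, Suc (snd k)))"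
    by (rule ext) (auto simp: adj2_def)
  ultimately show ?thesis by simp
qed

lemma shift1_ell2:
  assumes "\<forall>k. \<alpha> k > 0" "bdd_above (range \<alpha>)" "x \<in> ell2"
  shows "shift1 \<alpha> x \<in> ell2"
proof -
  obtain B where B: "\<And>k. cmod (complex_of_real (\<alpha> k)) \<le> B" using bound_cmod[OF assms(1,2)] by blast
  have f: "(\<lambda>k. complex_of_real (\<alpha> k) * x k) \<in> ell2" by (rule ell2_mult[OF assms(3) B])
  show ?thesis
  proof (rule ell2_extend[OF f, of "\<lambda>(a,b). (a+1,b)"])
    show "inj (\<lambda>(a::nat, b::nat). (a + 1, b))" by (auto simp: inj_def)
    show "\<And>j. shift1 \<alpha> x ((\<lambda>(a, b). (a + 1, b)) j) = complex_of_real (\<alpha> j) * x j"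
      by (auto simp: shift1_def)
    fix k :: idx assume "k \<notin> range (\<lambda>(a, b). (a + 1, b))"
    then have "fst k = 0"
      by (metis (no_types, lifting) Suc_diff_1 Suc_eq_plus1 case_prod_conv gr0I prod.collapse rangeI)
    then show "shift1 \<alpha> x k = 0" by (cases k) (auto simp: shift1_def)
  qed
qed

lemma shift2_ell2:
  assumes "\<forall>k. \<beta> k > 0" "bdd_above (range \<beta>)" "x \<in> ell2"
  shows "shift2 \<beta> x \<in> ell2"
proof -
  obtain B where B: "\<And>k. cmod (complex_of_real (\<beta> k)) \<le> B" using bound_cmod[OF assms(1,2)] by blast
  have f: "(\<lambda>k. complex_of_real (\<beta> k) * x k) \<in> ell2" by (rule ell2_mult[OF assms(3) B])
  show ?thesis
  proof (rule ell2_extend[OF f, of "\<lambda>(a,b). (a,b+1)"])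
    show "inj (\<lambda>(a::nat, b::nat). (a, b + 1))" by (auto simp: inj_def)
    show "\<And>j. shift2 \<beta> x ((\<lambda>(a, b). (a, b + 1)) j) = complex_of_real (\<beta> j) * x j"
      by (auto simp: shift2_def)
    fix k :: idx assume "k \<notin> range (\<lambda>(a, b). (a, b + 1))"
    then have "snd k = 0"
      by (metis (no_types, lifting) Suc_diff_1 Suc_eq_plus1 case_prod_conv gr0I prod.collapse rangeI)
    then show "shift2 \<beta> x k = 0" by (cases k) (auto simp: shift2_def)
  qed
qed

lemma adj_unique:
  assumes "\<forall>y\<in>ell2. S y \<in> ell2" "\<forall>x\<in>ell2. \<forall>y\<in>ell2. ip (T x) y = ip x (S y)" "y \<in> ell2"
  shows "adj T y = S y"
proof -
  let ?P = "\<lambda>S. (\<forall>y\<in>ell2. S y \<in> ell2) \<and> (\<forall>x\<in>ell2. \<forall>y\<in>ell2. ip (T x) y = ip x (S y))"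
  have "?P (adj T)" unfolding adj_def by (rule someI[of ?P S]) (use assms in auto)
  then have h: "\<And>x. x \<in> ell2 \<Longrightarrow> ip x (adj T y) = ip x (S y)" using assms by auto
  show ?thesis
  proof
    fix k
    have "cnj (adj T y k) = cnj (S y k)" using h[OF ebasis_ell2[of k]] by (simp add: ip_ebasis)
    then show "adj T y k = S y k" by simp
  qed
qed

lemma adj_shift1:
  assumes "\<forall>k. \<alpha> k > 0" "bdd_above (range \<alpha>)" "y \<in> ell2"
  shows "adj (shift1 \<alpha>) y = adj1 \<alpha> y"
  by (rule adj_unique) (use assms adj1_ell2 ip_shift1 in auto)

lemma adj_shift2:
  assumes "\<forall>k. \<beta> k > 0" "bdd_above (range \<beta>)" "y \<in> ell2"
  shows "adj (shift2 \<beta>) y = adj2 \<beta> y"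
  by (rule adj_unique) (use assms adj2_ell2 ip_shift2 in auto)


context
  fixes \<alpha> \<beta> :: "idx \<Rightarrow> real"
  assumes a1: "\<forall>k. \<alpha> k > 0" and a2: "\<forall>k. \<beta> k > 0"
    and a3: "bdd_above (range \<alpha>)" and a4: "bdd_above (range \<beta>)"
begin

lemma Lop_eq:
  assumes "x1 \<in> ell2" "x2 \<in> ell2"
  shows "Lop \<alpha> \<beta> (x1, x2) = (\<lambda>k. adj1 \<alpha> (shift1 \<alpha> x1) k + adj2 \<beta> (shift1 \<alpha> x2) k,
                                \<lambda>k. adj1 \<alpha> (shift2 \<beta> x1) k + adj2 \<beta> (shift2 \<beta> x2) k)"
  unfolding Lop_def Let_def opmat_def
  using assms a1 a2 a3 a4
  by (simp add: adj_shift1 adj_shift2 shift1_ell2 shift2_ell2)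

lemma Rop_eq:
  assumes "x1 \<in> ell2" "x2 \<in> ell2"
  shows "Rop \<alpha> \<beta> (x1, x2) = (\<lambda>k. shift1 \<alpha> (adj1 \<alpha> x1) k + shift1 \<alpha> (adj2 \<beta> x2) k,
                                \<lambda>k. shift2 \<beta> (adj1 \<alpha> x1) k + shift2 \<beta> (adj2 \<beta> x2) k)"
  unfolding Rop_def Let_def opmat_def
  using assms a1 a2 a3 a4
  by (simp add: adj_shift1 adj_shift2)

lemma Lop_closed:
  assumes "y \<in> ell2sum" shows "Lop \<alpha> \<beta> y \<in> ell2sum"
proof -
  obtain y1 y2 where y: "y = (y1, y2)" by force
  have e: "y1 \<in> ell2" "y2 \<in> ell2" using assms y by (auto simp: ell2sum_def)
  show ?thesis unfolding y Lop_eq[OF e] ell2sum_def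
    using e a1 a2 a3 a4
    by (auto intro!: ell2_add adj1_ell2 adj2_ell2 shift1_ell2 shift2_ell2)
qed

lemma Rop_closed:
  assumes "y \<in> ell2sum" shows "Rop \<alpha> \<beta> y \<in> ell2sum"
proof -
  obtain y1 y2 where y: "y = (y1, y2)" by force
  have e: "y1 \<in> ell2" "y2 \<in> ell2" using assms y by (auto simp: ell2sum_def)
  show ?thesis unfolding y Rop_eq[OF e] ell2sum_def
    using e a1 a2 a3 a4
    by (auto intro!: ell2_add adj1_ell2 adj2_ell2 shift1_ell2 shift2_ell2)
qed

lemma Lop_diag:
  assumes "y \<in> ell2sum" "\<And>a b. Q (a + b) \<Longrightarrow> fst y (a, b) = 0 \<and> snd y (a, b) = 0"
    "Q (a + b)"
  shows "fst (Lop \<alpha> \<beta> y) (a, b) = 0 \<and> snd (Lop \<alpha> \<beta> y) (a, b) = 0"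
proof -
  obtain y1 y2 where y: "y = (y1, y2)" by force
  have e: "y1 \<in> ell2" "y2 \<in> ell2" using assms y by (auto simp: ell2sum_def)
  have h: "\<And>a b. Q (a + b) \<Longrightarrow> y1 (a, b) = 0 \<and> y2 (a, b) = 0" using assms(2) y by auto
  have q1: "1 \<le> a \<Longrightarrow> Q (a - 1 + (b + 1))" using assms(3) by simp
  have q2: "1 \<le> b \<Longrightarrow> Q (a + 1 + (b - 1))" using assms(3) by simp
  show ?thesis unfolding y Lop_eq[OF e]
    using h[OF assms(3)] h[OF q1] h[OF q2]
    by (auto simp: adj1_def adj2_def shift1_def shift2_def)
qed

lemma Rop_diag:
  assumes "y \<in> ell2sum" "\<And>a b. Q (a + b) \<Longrightarrow> fst y (a, b) = 0 \<and> snd y (a, b) = 0"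
    "Q (a + b)"
  shows "fst (Rop \<alpha> \<beta> y) (a, b) = 0 \<and> snd (Rop \<alpha> \<beta> y) (a, b) = 0"
proof -
  obtain y1 y2 where y: "y = (y1, y2)" by force
  have e: "y1 \<in> ell2" "y2 \<in> ell2" using assms y by (auto simp: ell2sum_def)
  have h: "\<And>a b. Q (a + b) \<Longrightarrow> y1 (a, b) = 0 \<and> y2 (a, b) = 0" using assms(2) y by auto
  have q1: "1 \<le> a \<Longrightarrow> Q (a - 1 + (b + 1))" using assms(3) by simp
  have q2: "1 \<le> b \<Longrightarrow> Q (a + 1 + (b - 1))" using assms(3) by simp
  show ?thesis unfolding y Rop_eq[OF e]
    using h[OF assms(3)] h[OF q1] h[OF q2]
    by (auto simp: adj1_def adj2_def shift1_def shift2_def)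
qed

end


definition Dg :: "nat \<Rightarrow> idx set" where "Dg n = {k. fst k + snd k = n}"

lemma finite_Dg: "finite (Dg n)"
  by (rule finite_subset[of _ "{..n} \<times> {..n}"]) (auto simp: Dg_def)

lemma Kspace_eq: "Kspace n = {x. \<forall>k. k \<notin> Dg n \<longrightarrow> x k = 0}"
  unfolding Kspace_def Dg_def using ell2_finite_support[OF finite_Dg[of n]]
  by (auto simp: Dg_def)

lemma zero_ell2: "(\<lambda>_. 0) \<in> ell2"
  by (rule ell2_finite_support[of "{}"]) auto

lemma ip_zero: "ip (\<lambda>_. 0) y = 0"
  unfolding ip_def by (rule infsum_0) simp

lemma orth_eq: "orth2 (Kspace n \<times> Kspace n) = {y \<in> ell2sum. \<forall>k\<in>Dg n. fst y k = 0 \<and> snd y k = 0}"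
proof (intro equalityI subsetI)
  fix y assume y: "y \<in> orth2 (Kspace n \<times> Kspace n)"
  have "\<forall>k\<in>Dg n. fst y k = 0 \<and> snd y k = 0"
  proof
    fix k assume k: "k \<in> Dg n"
    have eb: "ebasis k \<in> Kspace n" unfolding Kspace_eq using k by (auto simp: ebasis_def)
    have z: "(\<lambda>_. 0) \<in> Kspace n" unfolding Kspace_eq by auto
    have "ip2 (ebasis k, \<lambda>_. 0) y = 0" "ip2 (\<lambda>_. 0, ebasis k) y = 0"
      using y eb z unfolding orth2_def by auto
    then show "fst y k = 0 \<and> snd y k = 0"
      by (simp_all add: ip2_def ip_ebasis ip_zero)
  qed
  then show "y \<in> {y \<in> ell2sum. \<forall>k\<in>Dg n. fst y k = 0 \<and> snd y k = 0}"
    using y unfolding orth2_def by auto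
next
  fix y assume y: "y \<in> {y \<in> ell2sum. \<forall>k\<in>Dg n. fst y k = 0 \<and> snd y k = 0}"
  have "ip2 x y = 0" if x: "x \<in> Kspace n \<times> Kspace n" for x
  proof -
    have "ip (fst x) (fst y) = 0" "ip (snd x) (snd y) = 0"
      unfolding ip_def using x y by (auto simp: Kspace_eq intro!: infsum_0)
    then show ?thesis by (simp add: ip2_def)
  qed
  then show "y \<in> orth2 (Kspace n \<times> Kspace n)" using y unfolding orth2_def by auto
qed

lemma reduces_gen:
  assumes cl: "\<And>y. y \<in> ell2sum \<Longrightarrow> A y \<in> ell2sum"
    and dg: "\<And>y Q a b. y \<in> ell2sum \<Longrightarrow> (\<And>a b. Q (a + b) \<Longrightarrow> fst y (a, b) = 0 \<and> snd y (a, b) = 0)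
      \<Longrightarrow> Q (a + b) \<Longrightarrow> fst (A y) (a, b) = 0 \<and> snd (A y) (a, b) = 0"
  shows "reduces A (Kspace n \<times> Kspace n)"
  unfolding reduces_def
proof
  show "A ` (Kspace n \<times> Kspace n) \<subseteq> Kspace n \<times> Kspace n"
  proof
    fix z assume "z \<in> A ` (Kspace n \<times> Kspace n)"
    then obtain y where y: "y \<in> Kspace n \<times> Kspace n" "z = A y" by auto
    have ye: "y \<in> ell2sum" using y by (auto simp: Kspace_def ell2sum_def)
    have "fst (A y) (a, b) = 0 \<and> snd (A y) (a, b) = 0" if "a + b \<noteq> n" for a b
      by (rule dg[OF ye, where Q = "\<lambda>s. s \<noteq> n"]) (use y that in \<open>auto simp: Kspace_eq Dg_def\<close>)
    then show "z \<in> Kspace n \<times> Kspace n" unfolding Kspace_eq Dg_def using y(2) by (auto simp: mem_Times_iff)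
  qed
next
  show "A ` orth2 (Kspace n \<times> Kspace n) \<subseteq> orth2 (Kspace n \<times> Kspace n)"
  proof
    fix z assume "z \<in> A ` orth2 (Kspace n \<times> Kspace n)"
    then obtain y where y: "y \<in> orth2 (Kspace n \<times> Kspace n)" "z = A y" by auto
    have ye: "y \<in> ell2sum" using y by (auto simp: orth_eq)
    have "fst (A y) (a, b) = 0 \<and> snd (A y) (a, b) = 0" if "a + b = n" for a b
      by (rule dg[OF ye, where Q = "\<lambda>s. s = n"]) (use y that in \<open>auto simp: orth_eq Dg_def\<close>)
    then show "z \<in> orth2 (Kspace n \<times> Kspace n)" unfolding orth_eq Dg_def using y(2) cl[OF ye] by auto
  qed
qed


definition getp :: "vec2 \<Rightarrow> bool \<times> idx \<Rightarrow> complex" where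
  "getp h p = (if fst p then fst h (snd p) else snd h (snd p))"

definition Pblocks :: "nat \<Rightarrow> (bool \<times> idx) list list" where
  "Pblocks n = [[(True, (0, n))]] @ map (\<lambda>i. [(True, (i, n - i)), (False, (i - 1, n - i + 1))]) [1..<n+1]
     @ [[(False, (n, 0))]]"

definition Pl :: "nat \<Rightarrow> (bool \<times> idx) list" where "Pl n = concat (Pblocks n)"

definition Uv :: "nat \<Rightarrow> vec2 \<Rightarrow> complex vec" where
  "Uv n h = vec_of_list (map (getp h) (Pl n))"

lemma len_concat2: "length (concat (map (\<lambda>i. [f i, g i]) xs)) = 2 * length xs"
  by (induction xs) auto

lemma length_Pl: "length (Pl n) = 2 * n + 2"
  unfolding Pl_def Pblocks_def by (simp add: len_concat2)

lemma set_Pl: "set (Pl n) = (UNIV :: bool set) \<times> Dg n"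
proof (intro equalityI subsetI)
  fix p assume "p \<in> set (Pl n)"
  then show "p \<in> UNIV \<times> Dg n" unfolding Pl_def Pblocks_def by (auto simp: Dg_def)
next
  fix p assume p: "p \<in> (UNIV :: bool set) \<times> (Dg n :: idx set)"
  obtain b k1 k2 where pe: "p = (b, (k1, k2))" by (cases p) auto
  have k: "k1 + k2 = n" using p pe by (auto simp: Dg_def)
  show "p \<in> set (Pl n)"
  proof (cases b)
    case True
    show ?thesis
    proof (cases "k1 = 0")
      case True
      then show ?thesis using pe \<open>b\<close> k unfolding Pl_def Pblocks_def by auto
    next
      case False
      then have "[(True, (k1, n - k1)), (False, (k1 - 1, n - k1 + 1))] \<in> set (Pblocks n)"
        using k unfolding Pblocks_def by auto
      then show ?thesis using pe \<open>b\<close> k unfolding Pl_def by force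
    qed
  next
    case False
    show ?thesis
    proof (cases "k1 = n")
      case True
      then show ?thesis using pe \<open>\<not> b\<close> k unfolding Pl_def Pblocks_def by auto
    next
      case False
      then have "[(True, (k1 + 1, n - (k1 + 1))), (False, (k1 + 1 - 1, n - (k1 + 1) + 1))] \<in> set (Pblocks n)"
        using k unfolding Pblocks_def by (auto simp del: upt_Suc)
      moreover have "(k1 + 1 - 1, n - (k1 + 1) + 1) = (k1, k2)" using k False by auto
      ultimately show ?thesis using pe \<open>\<not> b\<close> k unfolding Pl_def by force
    qed
  qed
qed

lemma card_Dg: "card (Dg n) = n + 1"
proof -
  have "Dg n = (\<lambda>i. (i, n - i)) ` {..n}" by (auto simp: Dg_def image_iff)
  moreover have "inj_on (\<lambda>i. (i, n - i)) {..n}" by (auto simp: inj_on_def)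
  ultimately show ?thesis by (simp add: card_image)
qed

lemma distinct_Pl: "distinct (Pl n)"
proof (rule card_distinct)
  have "card ((UNIV :: bool set) \<times> Dg n) = 2 * (n + 1)" by (simp add: card_cartesian_product card_Dg card_UNIV_bool)
  then show "card (set (Pl n)) = length (Pl n)" by (simp add: set_Pl length_Pl)
qed




lemma Uv_dim: "dim_vec (Uv n h) = 2 * n + 2"
  unfolding Uv_def by (simp only: dim_vec_of_list length_map length_Pl)
lemma Uv_carrier: "Uv n h \<in> carrier_vec (2 * n + 2)"
  by (simp only: carrier_vec_def mem_Collect_eq Uv_dim)

lemma Uv_index: "i < 2 * n + 2 \<Longrightarrow> Uv n h $ i = getp h (Pl n ! i)"
  unfolding Uv_def by (subst index_vec_of_list) (simp_all add: length_Pl)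



lemma Uv_add: "Uv n (add2 x y) = Uv n x + Uv n y"
proof (rule eq_vecI)
  fix i assume "i < dim_vec (Uv n x + Uv n y)"
  then have i: "i < 2 * n + 2" by (simp add: Uv_dim)
  show "Uv n (add2 x y) $ i = (Uv n x + Uv n y) $ i"
    using i by (simp add: Uv_index[OF i] Uv_dim getp_def add2_def)
qed (simp add: Uv_dim)

lemma Uv_scale: "Uv n (scale2 c x) = c \<cdot>\<^sub>v Uv n x"
proof (rule eq_vecI)
  fix i assume "i < dim_vec (c \<cdot>\<^sub>v Uv n x)"
  then have i: "i < 2 * n + 2" by (simp add: Uv_dim)
  show "Uv n (scale2 c x) $ i = (c \<cdot>\<^sub>v Uv n x) $ i"
    using i by (simp add: Uv_index[OF i] Uv_dim getp_def scale2_def)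
qed (simp add: Uv_dim)

lemma inj_nth_Pl: "inj_on (\<lambda>i. Pl n ! i) {..<2 * n + 2}"
  using distinct_Pl[of n] by (simp add: inj_on_def nth_eq_iff_index_eq length_Pl)

lemma image_nth_Pl: "(\<lambda>i. Pl n ! i) ` {..<2 * n + 2} = UNIV \<times> Dg n"
  using set_Pl[of n] by (auto simp: set_conv_nth length_Pl)

lemma ip_K:
  assumes "x \<in> Kspace n" "y \<in> Kspace n"
  shows "ip x y = (\<Sum>k\<in>Dg n. x k * cnj (y k))"
proof -
  have "ip x y = infsum (\<lambda>k. x k * cnj (y k)) (Dg n)"
    unfolding ip_def by (rule infsum_cong_neutral) (use assms in \<open>auto simp: Kspace_eq\<close>)
  then show ?thesis using finite_Dg by simp
qed

lemma Uv_ip: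
  assumes "x \<in> Kspace n \<times> Kspace n" "y \<in> Kspace n \<times> Kspace n"
  shows "ip2 x y = (\<Sum>i<2 * n + 2. Uv n x $ i * cnj (Uv n y $ i))"
proof -
  let ?g = "\<lambda>p. getp x p * cnj (getp y p)"
  have "(\<Sum>i<2 * n + 2. Uv n x $ i * cnj (Uv n y $ i)) = (\<Sum>i<2 * n + 2. ?g (Pl n ! i))"
    by (rule sum.cong) (simp_all add: Uv_index)
  also have "\<dots> = sum ?g ((\<lambda>i. Pl n ! i) ` {..<2 * n + 2})"
    using sum.reindex[OF inj_nth_Pl, of ?g] by (simp add: o_def)
  also have "\<dots> = sum ?g ((UNIV :: bool set) \<times> Dg n)" by (simp only: image_nth_Pl)
  also have "\<dots> = (\<Sum>b\<in>(UNIV :: bool set). \<Sum>k\<in>Dg n. ?g (b, k))"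
    by (simp add: sum.cartesian_product)
  also have "\<dots> = (\<Sum>k\<in>Dg n. ?g (True, k)) + (\<Sum>k\<in>Dg n. ?g (False, k))"
    by (simp add: UNIV_bool add.commute)
  also have "\<dots> = ip2 x y"
    using assms ip_K[of "fst x" n "fst y"] ip_K[of "snd x" n "snd y"]
    by (simp add: ip2_def getp_def mem_Times_iff)
  finally show ?thesis by simp
qed


lemma Uv_bij: "bij_betw (Uv n) (Kspace n \<times> Kspace n) (carrier_vec (2 * n + 2))"
proof (rule bij_betw_imageI)
  show "inj_on (Uv n) (Kspace n \<times> Kspace n)"
  proof (rule inj_onI)
    fix x y assume x: "x \<in> Kspace n \<times> Kspace n" and y: "y \<in> Kspace n \<times> Kspace n" and e: "Uv n x = Uv n y"
    have g: "getp x p = getp y p" if "p \<in> UNIV \<times> Dg n" for p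
    proof -
      have "p \<in> (\<lambda>i. Pl n ! i) ` {..<2 * n + 2}" using that by (simp only: image_nth_Pl)
      then obtain i where i: "i < 2 * n + 2" "p = Pl n ! i" by blast
      have "Uv n x $ i = Uv n y $ i" using e by (rule arg_cong)
      then show ?thesis using i by (simp only: Uv_index)
    qed
    have "fst x k = fst y k \<and> snd x k = snd y k" for k
    proof (cases "k \<in> Dg n")
      case True
      then show ?thesis using g[of "(True, k)"] g[of "(False, k)"] by (auto simp: getp_def)
    next
      case False
      then show ?thesis using x y by (cases k) (auto simp: Kspace_eq mem_Times_iff)
    qed
    then show "x = y" by (simp add: prod_eq_iff fun_eq_iff)
  qed
next
  show "Uv n ` (Kspace n \<times> Kspace n) = carrier_vec (2 * n + 2)"
  proof (intro equalityI subsetI)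
    fix v assume "v \<in> Uv n ` (Kspace n \<times> Kspace n)"
    then obtain h where "v = Uv n h" by blast
    then show "v \<in> carrier_vec (2 * n + 2)" using Uv_carrier by blast
  next
    fix v :: "complex vec" assume v: "v \<in> carrier_vec (2 * n + 2)"
    have dv: "dim_vec v = 2 * n + 2" using v by (rule carrier_vecD)
    define ix where "ix = the_inv_into {..<2 * n + 2} (\<lambda>i. Pl n ! i)"
    define h where "h = ((\<lambda>k. if k \<in> Dg n then v $ ix (True, k) else 0),
                         (\<lambda>k. if k \<in> Dg n then v $ ix (False, k) else 0))"
    have hK: "h \<in> Kspace n \<times> Kspace n" by (simp add: h_def Kspace_eq)
    have Uh: "Uv n h = v"
    proof (rule eq_vecI)
      show "dim_vec (Uv n h) = dim_vec v" by (simp only: dv Uv_dim)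
      fix i assume "i < dim_vec v"
      then have i: "i < 2 * n + 2" by (simp only: dv)
      have ixi: "ix (Pl n ! i) = i" unfolding ix_def
        by (rule the_inv_into_f_f[OF inj_nth_Pl]) (use i in simp)
      have "Pl n ! i \<in> (\<lambda>i. Pl n ! i) ` {..<2 * n + 2}" using i by blast
      then have "Pl n ! i \<in> UNIV \<times> Dg n" by (simp only: image_nth_Pl)
      then have "getp h (Pl n ! i) = v $ ix (Pl n ! i)"
        by (cases "Pl n ! i") (auto simp: getp_def h_def)
      then show "Uv n h $ i = v $ i" using ixi by (simp only: Uv_index[OF i])
    qed
    show "v \<in> Uv n ` (Kspace n \<times> Kspace n)" using hK Uh by blast
  qed
qed

lemma vec_of_list_append: "vec_of_list (xs @ ys) = vec_of_list xs @\<^sub>v vec_of_list ys"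
  by (metis list_of_vec_append list_vec vec_list)

lemma diag_mult:
  assumes "\<forall>(B, l)\<in>set Bl. B \<in> carrier_mat (length l) (length l)"
  shows "diag_block_mat (map fst Bl) *\<^sub>v vec_of_list (concat (map snd Bl))
     = vec_of_list (concat (map (\<lambda>(B, l). list_of_vec (B *\<^sub>v vec_of_list l)) Bl))"
  using assms
proof (induction Bl)
  case Nil
  show ?case by (rule eq_vecI) auto
next
  case (Cons p Bl)
  obtain B l where p: "p = (B, l)" by force
  let ?D = "diag_block_mat (map fst Bl)"
  let ?m = "length (concat (map snd Bl))"
  let ?F = "\<lambda>(B, l). list_of_vec (B *\<^sub>v vec_of_list l)"
  have B: "B \<in> carrier_mat (length l) (length l)" using Cons.prems p by auto
  have P: "\<And>q. q \<in> set Bl \<Longrightarrow> fst q \<in> carrier_mat (length (snd q)) (length (snd q))"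
    using Cons.prems by auto
  have r: "map (\<lambda>p. dim_row (fst p)) Bl = map (\<lambda>p. length (snd p)) Bl"
    by (rule map_cong[OF refl]) (rule carrier_matD(1)[OF P])
  have c: "map (\<lambda>p. dim_col (fst p)) Bl = map (\<lambda>p. length (snd p)) Bl"
    by (rule map_cong[OF refl]) (rule carrier_matD(2)[OF P])
  have dD1: "dim_row ?D = ?m"
    unfolding dim_diag_block_mat length_concat map_map o_def r ..
  have dD2: "dim_col ?D = ?m"
    unfolding dim_diag_block_mat length_concat map_map o_def c ..
  have D: "?D \<in> carrier_mat ?m ?m" using dD1 dD2 by (rule carrier_matI)
  have dB1: "dim_row B = length l" and dB2: "dim_col B = length l" using B by auto
  have a: "vec_of_list l \<in> carrier_vec (length l)" by (rule carrier_vecI) (rule dim_vec_of_list)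
  have d: "vec_of_list (concat (map snd Bl)) \<in> carrier_vec ?m" by (rule carrier_vecI) (rule dim_vec_of_list)
  have IH: "?D *\<^sub>v vec_of_list (concat (map snd Bl)) = vec_of_list (concat (map ?F Bl))"
    using Cons by auto
  have eq: "diag_block_mat (map fst (p # Bl)) = four_block_mat B (0\<^sub>m (length l) ?m) (0\<^sub>m ?m (length l)) ?D"
    by (simp only: p list.map fst_conv diag_block_mat.simps Let_def dD1 dD2 dB1 dB2)
  have cc: "concat (map snd (p # Bl)) = l @ concat (map snd Bl)"
    by (simp only: p list.map snd_conv concat.simps)
  have cF: "concat (map ?F (p # Bl)) = list_of_vec (B *\<^sub>v vec_of_list l) @ concat (map ?F Bl)"
    by (simp only: p list.map prod.case concat.simps)
  have "diag_block_mat (map fst (p # Bl)) *\<^sub>v vec_of_list (concat (map snd (p # Bl)))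
      = B *\<^sub>v vec_of_list l @\<^sub>v ?D *\<^sub>v vec_of_list (concat (map snd Bl))"
    unfolding eq cc vec_of_list_append by (rule mult_mat_vec_split[OF B D a d])
  also have "\<dots> = vec_of_list (concat (map ?F (p # Bl)))"
    unfolding IH cF vec_of_list_append vec_list ..
  finally show ?case .
qed

lemma sum2: "(\<Sum>j\<in>{0..<2::nat}. f j) = f 0 + f 1"
  by (simp add: numeral_2_eq_2)
lemma blk_row: "dim_vec v = 2 \<Longrightarrow> i < 2 \<Longrightarrow> (blk a b c d *\<^sub>v v) $ i = blk a b c d $$ (i,0) * v $ 0 + blk a b c d $$ (i,1) * v $ 1"
  by (simp add: blk_def scalar_prod_def sum2)
lemma blk_mult0: "blk a b c d *\<^sub>v vec_of_list [u, w] = vec_of_list [a * u + b * w, c * u + d * w]"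
  proof (rule eq_vecI)
    show "dim_vec (blk a b c d *\<^sub>v vec_of_list [u, w]) = dim_vec (vec_of_list [a * u + b * w, c * u + d * w])"
      by (simp add: blk_def)
    fix i assume "i < dim_vec (vec_of_list [a * u + b * w, c * u + d * w])"
    then have i: "i < 2" by simp
    have v0: "vec_of_list [u, w] $ 0 = u" and v1: "vec_of_list [u, w] $ 1 = w" 
      by (simp_all add: vec_of_list_index)
    have "(blk a b c d *\<^sub>v vec_of_list [u, w]) $ i = blk a b c d $$ (i,0) * u + blk a b c d $$ (i,1) * w"
      using blk_row[OF _ i, of "vec_of_list [u, w]"] v0 v1 by simp
    moreover have "i = 0 \<or> i = 1" using i by auto
    ultimately show "(blk a b c d *\<^sub>v vec_of_list [u, w]) $ i = vec_of_list [a * u + b * w, c * u + d * w] $ i"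
      by (auto simp: blk_def vec_of_list_index)
  qed
lemma sq_mult0: "sq a *\<^sub>v vec_of_list [u] = vec_of_list [a * u]"
  by (rule eq_vecI) (auto simp: sq_def scalar_prod_def vec_of_list_index)

lemma sq_mult: "list_of_vec (sq a *\<^sub>v vec_of_list [u]) = [a * u]"
  unfolding sq_mult0 by (rule list_vec)

lemma blk_mult: "list_of_vec (blk a b c d *\<^sub>v vec_of_list [u, w]) = [a * u + b * w, c * u + d * w]"
  unfolding blk_mult0 by (rule list_vec)



lemma sq_mult': "list_of_vec (sq a *\<^sub>v vCons u vNil) = [a * u]"
  using sq_mult[of a u] by (simp only: vec_of_list_Cons vec_of_list_Nil)

lemma blk_mult': "list_of_vec (blk a b c d *\<^sub>v vCons u (vCons w vNil)) = [a * u + b * w, c * u + d * w]"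
  using blk_mult[of a b c d u w] by (simp only: vec_of_list_Cons vec_of_list_Nil)

lemma sum_list_const2: "sum_list (map (\<lambda>_. (2::nat)) xs) = 2 * length xs"
  by (induction xs) auto

lemma Lmat_dims: "dim_row (Lmat \<alpha> \<beta> n) = 2 * n + 2 \<and> dim_col (Lmat \<alpha> \<beta> n) = 2 * n + 2"
  unfolding Lmat_def dim_diag_block_mat
  by (simp add: sq_def blk_def o_def sum_list_const2 del: upt_Suc)

lemma Rmat_dims: "dim_row (Rmat \<alpha> \<beta> n) = 2 * n + 2 \<and> dim_col (Rmat \<alpha> \<beta> n) = 2 * n + 2"
  unfolding Rmat_def dim_diag_block_mat
  by (simp add: sq_def blk_def o_def sum_list_const2 del: upt_Suc)

lemma Lmat_carrier: "Lmat \<alpha> \<beta> n \<in> carrier_mat (2 * n + 2) (2 * n + 2)"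
  using Lmat_dims by (auto intro: carrier_matI)

lemma Rmat_carrier: "Rmat \<alpha> \<beta> n \<in> carrier_mat (2 * n + 2) (2 * n + 2)"
  using Rmat_dims by (auto intro: carrier_matI)

context
  fixes \<alpha> \<beta> :: "idx \<Rightarrow> real"
  assumes a1: "\<forall>k. \<alpha> k > 0" and a2: "\<forall>k. \<beta> k > 0"
    and a3: "bdd_above (range \<alpha>)" and a4: "bdd_above (range \<beta>)"
begin

lemmas Leq = Lop_eq[OF a1 a2 a3 a4]
lemmas Req = Rop_eq[OF a1 a2 a3 a4]

lemma LT0: "x1 \<in> ell2 \<Longrightarrow> x2 \<in> ell2 \<Longrightarrow>
  fst (Lop \<alpha> \<beta> (x1, x2)) (0, n) = complex_of_real ((\<alpha> (0, n))\<^sup>2) * x1 (0, n)"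
  by (simp add: Leq adj1_def adj2_def shift1_def shift2_def power2_eq_square)

lemma LTi: "x1 \<in> ell2 \<Longrightarrow> x2 \<in> ell2 \<Longrightarrow> 1 \<le> i \<Longrightarrow> i \<le> n \<Longrightarrow>
  fst (Lop \<alpha> \<beta> (x1, x2)) (i, n - i) = complex_of_real ((\<alpha> (i, n - i))\<^sup>2) * x1 (i, n - i)
    + complex_of_real (\<alpha> (i - 1, n - i + 1) * \<beta> (i, n - i)) * x2 (i - 1, n - i + 1)"
  by (simp add: Leq adj1_def adj2_def shift1_def shift2_def power2_eq_square algebra_simps)

lemma LFi: "x1 \<in> ell2 \<Longrightarrow> x2 \<in> ell2 \<Longrightarrow> 1 \<le> i \<Longrightarrow> i \<le> n \<Longrightarrow>
  snd (Lop \<alpha> \<beta> (x1, x2)) (i - 1, n - i + 1) = complex_of_real (\<alpha> (i - 1, n - i + 1) * \<beta> (i, n - i)) * x1 (i, n - i)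
    + complex_of_real ((\<beta> (i - 1, n - i + 1))\<^sup>2) * x2 (i - 1, n - i + 1)"
  by (simp add: Leq adj1_def adj2_def shift1_def shift2_def power2_eq_square algebra_simps)

lemma LFn: "x1 \<in> ell2 \<Longrightarrow> x2 \<in> ell2 \<Longrightarrow>
  snd (Lop \<alpha> \<beta> (x1, x2)) (n, 0) = complex_of_real ((\<beta> (n, 0))\<^sup>2) * x2 (n, 0)"
  by (simp add: Leq adj1_def adj2_def shift1_def shift2_def power2_eq_square)

lemma RT0: "x1 \<in> ell2 \<Longrightarrow> x2 \<in> ell2 \<Longrightarrow> fst (Rop \<alpha> \<beta> (x1, x2)) (0, n) = 0"
  by (simp add: Req adj1_def adj2_def shift1_def shift2_def)

lemma RTi: "x1 \<in> ell2 \<Longrightarrow> x2 \<in> ell2 \<Longrightarrow> 1 \<le> i \<Longrightarrow> i \<le> n \<Longrightarrow>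
  fst (Rop \<alpha> \<beta> (x1, x2)) (i, n - i) = complex_of_real ((\<alpha> (i - 1, n - i))\<^sup>2) * x1 (i, n - i)
    + complex_of_real (\<alpha> (i - 1, n - i) * \<beta> (i - 1, n - i)) * x2 (i - 1, n - i + 1)"
  by (simp add: Req adj1_def adj2_def shift1_def shift2_def power2_eq_square algebra_simps)

lemma RFi: "x1 \<in> ell2 \<Longrightarrow> x2 \<in> ell2 \<Longrightarrow> 1 \<le> i \<Longrightarrow> i \<le> n \<Longrightarrow>
  snd (Rop \<alpha> \<beta> (x1, x2)) (i - 1, n - i + 1) = complex_of_real (\<alpha> (i - 1, n - i) * \<beta> (i - 1, n - i)) * x1 (i, n - i)
    + complex_of_real ((\<beta> (i - 1, n - i))\<^sup>2) * x2 (i - 1, n - i + 1)"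
  by (simp add: Req adj1_def adj2_def shift1_def shift2_def power2_eq_square algebra_simps)

lemma RFn: "x1 \<in> ell2 \<Longrightarrow> x2 \<in> ell2 \<Longrightarrow> snd (Rop \<alpha> \<beta> (x1, x2)) (n, 0) = 0"
  by (simp add: Req adj1_def adj2_def shift1_def shift2_def)

lemma L_act:
  assumes x: "x \<in> Kspace n \<times> Kspace n"
  shows "Uv n (Lop \<alpha> \<beta> x) = Lmat \<alpha> \<beta> n *\<^sub>v Uv n x"
proof -
  obtain x1 x2 where xe: "x = (x1, x2)" by force
  have e: "x1 \<in> ell2" "x2 \<in> ell2" using x xe by (auto simp: Kspace_def)
  define Bl where "Bl = [(sq (complex_of_real ((\<alpha> (0, n))\<^sup>2)), [x1 (0, n)])] @
      map (\<lambda>i. (blk (complex_of_real ((\<alpha> (i, n - i))\<^sup>2))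
                     (complex_of_real (\<alpha> (i - 1, n - i + 1) * \<beta> (i, n - i)))
                     (complex_of_real (\<alpha> (i - 1, n - i + 1) * \<beta> (i, n - i)))
                     (complex_of_real ((\<beta> (i - 1, n - i + 1))\<^sup>2)), [x1 (i, n - i), x2 (i - 1, n - i + 1)])) [1..<n+1] @
      [(sq (complex_of_real ((\<beta> (n, 0))\<^sup>2)), [x2 (n, 0)])]"
  have c: "\<forall>(B, l)\<in>set Bl. B \<in> carrier_mat (length l) (length l)"
    by (auto simp: Bl_def sq_def blk_def)
  have m: "Lmat \<alpha> \<beta> n = diag_block_mat (map fst Bl)"
    by (simp add: Bl_def Lmat_def o_def del: upt_Suc)
  have u: "map (getp x) (Pl n) = concat (map snd Bl)"
    by (simp add: Pl_def Pblocks_def Bl_def map_concat getp_def xe o_def del: upt_Suc)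
  have f: "map (\<lambda>(B, l). list_of_vec (B *\<^sub>v vec_of_list l)) Bl = map (map (getp (Lop \<alpha> \<beta> x))) (Pblocks n)"
    by (simp add: Bl_def Pblocks_def sq_mult' blk_mult' getp_def xe LT0[simplified] LTi[simplified] LFi[simplified] LFn[simplified] e o_def del: upt_Suc cong: map_cong)
  have "Uv n (Lop \<alpha> \<beta> x) = vec_of_list (concat (map (map (getp (Lop \<alpha> \<beta> x))) (Pblocks n)))"
    unfolding Uv_def Pl_def map_concat ..
  also have "\<dots> = Lmat \<alpha> \<beta> n *\<^sub>v Uv n x"
    unfolding f[symmetric] m Uv_def u by (rule diag_mult[OF c, symmetric])
  finally show ?thesis .
qed

lemma R_act:
  assumes x: "x \<in> Kspace n \<times> Kspace n"
  shows "Uv n (Rop \<alpha> \<beta> x) = Rmat \<alpha> \<beta> n *\<^sub>v Uv n x"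
proof -
  obtain x1 x2 where xe: "x = (x1, x2)" by force
  have e: "x1 \<in> ell2" "x2 \<in> ell2" using x xe by (auto simp: Kspace_def)
  define Bl where "Bl = [(sq 0, [x1 (0, n)])] @
      map (\<lambda>i. (blk (complex_of_real ((\<alpha> (i - 1, n - i))\<^sup>2))
                     (complex_of_real (\<alpha> (i - 1, n - i) * \<beta> (i - 1, n - i)))
                     (complex_of_real (\<alpha> (i - 1, n - i) * \<beta> (i - 1, n - i)))
                     (complex_of_real ((\<beta> (i - 1, n - i))\<^sup>2)), [x1 (i, n - i), x2 (i - 1, n - i + 1)])) [1..<n+1] @
      [(sq 0, [x2 (n, 0)])]"
  have c: "\<forall>(B, l)\<in>set Bl. B \<in> carrier_mat (length l) (length l)"
    by (auto simp: Bl_def sq_def blk_def)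
  have m: "Rmat \<alpha> \<beta> n = diag_block_mat (map fst Bl)"
    by (simp add: Bl_def Rmat_def o_def del: upt_Suc)
  have u: "map (getp x) (Pl n) = concat (map snd Bl)"
    by (simp add: Pl_def Pblocks_def Bl_def map_concat getp_def xe o_def del: upt_Suc)
  have f: "map (\<lambda>(B, l). list_of_vec (B *\<^sub>v vec_of_list l)) Bl = map (map (getp (Rop \<alpha> \<beta> x))) (Pblocks n)"
    by (simp add: Bl_def Pblocks_def sq_mult' blk_mult' getp_def xe RT0[simplified] RTi[simplified] RFi[simplified] RFn[simplified] e o_def del: upt_Suc cong: map_cong)
  have "Uv n (Rop \<alpha> \<beta> x) = vec_of_list (concat (map (map (getp (Rop \<alpha> \<beta> x))) (Pblocks n)))"
    unfolding Uv_def Pl_def map_concat ..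
  also have "\<dots> = Rmat \<alpha> \<beta> n *\<^sub>v Uv n x"
    unfolding f[symmetric] m Uv_def u by (rule diag_mult[OF c, symmetric])
  finally show ?thesis .
qed

lemma final:
  "reduces (Lop \<alpha> \<beta>) (Kspace n \<times> Kspace n) \<and> reduces (Rop \<alpha> \<beta>) (Kspace n \<times> Kspace n)
    \<and> unit_equiv_restr (Lop \<alpha> \<beta>) (Kspace n \<times> Kspace n) (Lmat \<alpha> \<beta> n)
    \<and> unit_equiv_restr (Rop \<alpha> \<beta>) (Kspace n \<times> Kspace n) (Rmat \<alpha> \<beta> n)"
proof (intro conjI)
  show "reduces (Lop \<alpha> \<beta>) (Kspace n \<times> Kspace n)"
  proof (rule reduces_gen)
    fix y assume "y \<in> ell2sum" then show "Lop \<alpha> \<beta> y \<in> ell2sum" by (rule Lop_closed[OF a1 a2 a3 a4])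
  next
    fix y Q a b assume "y \<in> ell2sum" "\<And>a b. Q (a + b) \<Longrightarrow> fst y (a, b) = 0 \<and> snd y (a, b) = 0" "Q (a + b)"
    then show "fst (Lop \<alpha> \<beta> y) (a, b) = 0 \<and> snd (Lop \<alpha> \<beta> y) (a, b) = 0"
      by (rule Lop_diag[OF a1 a2 a3 a4])
  qed
  show "reduces (Rop \<alpha> \<beta>) (Kspace n \<times> Kspace n)"
  proof (rule reduces_gen)
    fix y assume "y \<in> ell2sum" then show "Rop \<alpha> \<beta> y \<in> ell2sum" by (rule Rop_closed[OF a1 a2 a3 a4])
  next
    fix y Q a b assume "y \<in> ell2sum" "\<And>a b. Q (a + b) \<Longrightarrow> fst y (a, b) = 0 \<and> snd y (a, b) = 0" "Q (a + b)"
    then show "fst (Rop \<alpha> \<beta> y) (a, b) = 0 \<and> snd (Rop \<alpha> \<beta> y) (a, b) = 0"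
      by (rule Rop_diag[OF a1 a2 a3 a4])
  qed
  show "unit_equiv_restr (Lop \<alpha> \<beta>) (Kspace n \<times> Kspace n) (Lmat \<alpha> \<beta> n)"
    unfolding unit_equiv_restr_def
  proof (intro exI conjI)
    show "Lmat \<alpha> \<beta> n \<in> carrier_mat (2 * n + 2) (2 * n + 2)" by (rule Lmat_carrier)
    show "bij_betw (Uv n) (Kspace n \<times> Kspace n) (carrier_vec (2 * n + 2))" by (rule Uv_bij)
    show "\<forall>x\<in>Kspace n \<times> Kspace n. \<forall>y\<in>Kspace n \<times> Kspace n. Uv n (add2 x y) = Uv n x + Uv n y"
      using Uv_add by blast
    show "\<forall>c. \<forall>x\<in>Kspace n \<times> Kspace n. Uv n (scale2 c x) = c \<cdot>\<^sub>v Uv n x"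
      using Uv_scale by blast
    show "\<forall>x\<in>Kspace n \<times> Kspace n. \<forall>y\<in>Kspace n \<times> Kspace n.
        ip2 x y = (\<Sum>i<2 * n + 2. Uv n x $ i * cnj (Uv n y $ i))"
      using Uv_ip by blast
    show "\<forall>x\<in>Kspace n \<times> Kspace n. Uv n (Lop \<alpha> \<beta> x) = Lmat \<alpha> \<beta> n *\<^sub>v Uv n x"
      using L_act by blast
  qed
  show "unit_equiv_restr (Rop \<alpha> \<beta>) (Kspace n \<times> Kspace n) (Rmat \<alpha> \<beta> n)"
    unfolding unit_equiv_restr_def
  proof (intro exI conjI)
    show "Rmat \<alpha> \<beta> n \<in> carrier_mat (2 * n + 2) (2 * n + 2)" by (rule Rmat_carrier)
    show "bij_betw (Uv n) (Kspace n \<times> Kspace n) (carrier_vec (2 * n + 2))" by (rule Uv_bij)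
    show "\<forall>x\<in>Kspace n \<times> Kspace n. \<forall>y\<in>Kspace n \<times> Kspace n. Uv n (add2 x y) = Uv n x + Uv n y"
      using Uv_add by blast
    show "\<forall>c. \<forall>x\<in>Kspace n \<times> Kspace n. Uv n (scale2 c x) = c \<cdot>\<^sub>v Uv n x"
      using Uv_scale by blast
    show "\<forall>x\<in>Kspace n \<times> Kspace n. \<forall>y\<in>Kspace n \<times> Kspace n.
        ip2 x y = (\<Sum>i<2 * n + 2. Uv n x $ i * cnj (Uv n y $ i))"
      using Uv_ip by blast
    show "\<forall>x\<in>Kspace n \<times> Kspace n. Uv n (Rop \<alpha> \<beta> x) = Rmat \<alpha> \<beta> n *\<^sub>v Uv n x"
      using R_act by blast
  qed
qed

end


theorem theorem3p1:
  fixes \<alpha> \<beta> :: "nat \<times> nat \<Rightarrow> real" and n :: nat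
  assumes "\<forall>k. \<alpha> k > 0" and "\<forall>k. \<beta> k > 0"
    and "bdd_above (range \<alpha>)" and "bdd_above (range \<beta>)"
  shows "reduces (Lop \<alpha> \<beta>) (Kspace n \<times> Kspace n) \<and> reduces (Rop \<alpha> \<beta>) (Kspace n \<times> Kspace n)
    \<and> unit_equiv_restr (Lop \<alpha> \<beta>) (Kspace n \<times> Kspace n) (Lmat \<alpha> \<beta> n)
    \<and> unit_equiv_restr (Rop \<alpha> \<beta>) (Kspace n \<times> Kspace n) (Rmat \<alpha> \<beta> n)"
  by (rule final[OF assms])

end
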